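(* Let $\mathfrak{C}$ be a class of languages closed under inverse gsm-mappings and intersection with regular languages (for example, the context-free or the deterministic context-free languages). Let $S$ be a semigroup, $I,\Lambda$ index sets and $P=(p_{\lambda i})$ a $\Lambda\times I$ matrix over $S$, and suppose the Rees matrix semigroup $\mathcal{M}[S;I,\Lambda;P]$ is finitely generated. Then $\mathcal{M}[S;I,\Lambda;P]$ is $U(\mathfrak{C})$ if and only if $S$ is $U(\mathfrak{C})$.
   Context: For a semigroup $S$ generated by a finite set $A$, $\mathrm{WP}(S,A)=\{u\#v^{\mathrm{rev}} : u,v\in A^+,\ u=_S v\}$, where $\#\notin A$ and $v^{\mathrm{rev}}$ is the reversal of $v$. For a class of languages $\mathfrak{C}$, a semigroup is $U(\mathfrak{C})$ if it is finitely generated and its word problem with respect to some (equivalently any) finite generating set lies in $\mathfrak{C}$. The Rees matrix semigroup $\mathcal{M}[S;I,\Lambda;P]$ is the set $I\times S\times\Lambda$ with multiplication $(i,x,\lambda)(j,y,\mu)=(i,xp_{\lambda j}y,\mu)$. *)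

theory Defs
  imports Main
begin

definition is_semigroup :: "'a set \<Rightarrow> ('a \<Rightarrow> 'a \<Rightarrow> 'a) \<Rightarrow> bool" where
  "is_semigroup S m \<longleftrightarrow>
     (\<forall>x\<in>S. \<forall>y\<in>S. m x y \<in> S) \<and>
     (\<forall>x\<in>S. \<forall>y\<in>S. \<forall>z\<in>S. m (m x y) z = m x (m y z))"

inductive_set gen_by :: "('a \<Rightarrow> 'a \<Rightarrow> 'a) \<Rightarrow> 'a set \<Rightarrow> 'a set"
  for m :: "'a \<Rightarrow> 'a \<Rightarrow> 'a" and A :: "'a set" where
  gen_base: "a \<in> A \<Longrightarrow> a \<in> gen_by m A"
| gen_mult: "x \<in> gen_by m A \<Longrightarrow> y \<in> gen_by m A \<Longrightarrow> m x y \<in> gen_by m A"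

definition finitely_generated :: "'a set \<Rightarrow> ('a \<Rightarrow> 'a \<Rightarrow> 'a) \<Rightarrow> bool" where
  "finitely_generated S m \<longleftrightarrow> (\<exists>A. finite A \<and> A \<subseteq> S \<and> gen_by m A = S)"

definition rees_mult :: "('a \<Rightarrow> 'a \<Rightarrow> 'a) \<Rightarrow> ('l \<Rightarrow> 'i \<Rightarrow> 'a)
    \<Rightarrow> 'i \<times> 'a \<times> 'l \<Rightarrow> 'i \<times> 'a \<times> 'l \<Rightarrow> 'i \<times> 'a \<times> 'l" where
  "rees_mult m P = (\<lambda>(i, x, l) (j, y, mu). (i, m (m x (P l j)) y, mu))"

definition rees_carrier :: "'a set \<Rightarrow> 'i set \<Rightarrow> 'l set \<Rightarrow> ('i \<times> 'a \<times> 'l) set" where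
  "rees_carrier S I L = I \<times> S \<times> L"

text \<open>Symbols are natural numbers; a finite alphabet is a finite set of naturals.
  A finite generating set A is encoded by a finite alphabet Sg and an
  injective labelling f : Sg -> S with image A.\<close>

fun word_eval :: "('a \<Rightarrow> 'a \<Rightarrow> 'a) \<Rightarrow> (nat \<Rightarrow> 'a) \<Rightarrow> nat list \<Rightarrow> 'a" where
  "word_eval m f [] = undefined"
| "word_eval m f [a] = f a"
| "word_eval m f (a # b # w) = m (f a) (word_eval m f (b # w))"

definition word_problem :: "('a \<Rightarrow> 'a \<Rightarrow> 'a) \<Rightarrow> (nat \<Rightarrow> 'a) \<Rightarrow> nat set \<Rightarrow> nat \<Rightarrow> nat list set" where
  "word_problem m f Sg h =
     {u @ [h] @ rev v | u v. u \<noteq> [] \<and> v \<noteq> [] \<and> set u \<subseteq> Sg \<and> set v \<subseteq> Sg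
                          \<and> word_eval m f u = word_eval m f v}"

definition is_U :: "nat list set set \<Rightarrow> 'a set \<Rightarrow> ('a \<Rightarrow> 'a \<Rightarrow> 'a) \<Rightarrow> bool" where
  "is_U C S m \<longleftrightarrow>
     (\<exists>Sg f h. finite Sg \<and> h \<notin> Sg \<and> inj_on f Sg \<and> f ` Sg \<subseteq> S
        \<and> gen_by m (f ` Sg) = S \<and> word_problem m f Sg h \<in> C)"

inductive nfa_run :: "(nat \<times> nat \<times> nat) set \<Rightarrow> nat \<Rightarrow> nat list \<Rightarrow> nat \<Rightarrow> bool"
  for T where
  nfa_nil: "nfa_run T q [] q"
| nfa_step: "(q, a, q1) \<in> T \<Longrightarrow> nfa_run T q1 w q2 \<Longrightarrow> nfa_run T q (a # w) q2"

definition regular_lang :: "nat list set \<Rightarrow> bool" where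
  "regular_lang R \<longleftrightarrow> (\<exists>T q0 F. finite T \<and> R = {w. \<exists>q\<in>F. nfa_run T q0 w q})"

inductive gsm_run :: "(nat \<times> nat \<times> nat list \<times> nat) set \<Rightarrow> nat \<Rightarrow> nat list \<Rightarrow> nat list \<Rightarrow> nat \<Rightarrow> bool"
  for T where
  gsm_nil: "gsm_run T q [] [] q"
| gsm_step: "(q, a, out, q1) \<in> T \<Longrightarrow> gsm_run T q1 w out' q2 \<Longrightarrow> gsm_run T q (a # w) (out @ out') q2"

definition inv_gsm :: "(nat \<times> nat \<times> nat list \<times> nat) set \<Rightarrow> nat \<Rightarrow> nat set \<Rightarrow> nat list set \<Rightarrow> nat list set" where
  "inv_gsm T q0 F L = {w. \<exists>out q. gsm_run T q0 w out q \<and> q \<in> F \<and> out \<in> L}"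

definition closed_inv_gsm :: "nat list set set \<Rightarrow> bool" where
  "closed_inv_gsm C \<longleftrightarrow> (\<forall>L\<in>C. \<forall>T q0 F. finite T \<longrightarrow> inv_gsm T q0 F L \<in> C)"

definition closed_int_regular :: "nat list set set \<Rightarrow> bool" where
  "closed_int_regular C \<longleftrightarrow> (\<forall>L\<in>C. \<forall>R. regular_lang R \<longrightarrow> L \<inter> R \<in> C)"

end

theory Submission
  imports Defs "HOL-Library.Nat_Bijection"
begin

fun tout :: "(nat \<Rightarrow> nat \<Rightarrow> nat) \<Rightarrow> (nat \<Rightarrow> nat \<Rightarrow> nat list) \<Rightarrow> (nat \<Rightarrow> nat list) \<Rightarrow> nat \<Rightarrow> nat list \<Rightarrow> nat list" where
  "tout d ou fl q [] = fl q"
| "tout d ou fl q (a # w) = ou q a @ tout d ou fl (d q a) w"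

definition enc :: "nat \<Rightarrow> nat \<Rightarrow> nat \<Rightarrow> nat" where
  "enc p a b = prod_encode (p, prod_encode (a, b))"

lemma enc_eq[simp]: "enc p a b = enc p' a' b' \<longleftrightarrow> p = p' \<and> a = a' \<and> b = b'"
  by (simp add: enc_def)

definition gT where
  "gT Sig h h' QL QR qLi qRi dL oL flL dR oR flR =
     (\<lambda>a. (enc 0 qLi 0, a, oL qLi a, enc 1 (dL qLi a) 0)) ` Sig
   \<union> (\<lambda>(q, a). (enc 1 q 0, a, oL q a, enc 1 (dL q a) 0)) ` (QL \<times> Sig)
   \<union> (\<lambda>q. (enc 1 q 0, h, flL q @ [h'], enc 2 q qRi)) ` QL
   \<union> (\<lambda>(q, r, a). (enc 2 q r, a, oR r a, enc 2 q (dR r a))) ` (QL \<times> QR \<times> Sig)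
   \<union> (\<lambda>(q, r, a). (enc 2 q r, a, oR r a @ flR (dR r a), enc 3 q (dR r a))) ` (QL \<times> QR \<times> Sig)"


lemma gT_m0: "a \<in> Sig \<Longrightarrow> (enc 0 qLi 0, a, oL qLi a, enc 1 (dL qLi a) 0) \<in> gT Sig h h' QL QR qLi qRi dL oL flL dR oR flR"
  unfolding gT_def by blast
lemma gT_m1: "q \<in> QL \<Longrightarrow> a \<in> Sig \<Longrightarrow> (enc 1 q 0, a, oL q a, enc 1 (dL q a) 0) \<in> gT Sig h h' QL QR qLi qRi dL oL flL dR oR flR"
  unfolding gT_def by (intro UnI1 UnI2 image_eqI[where x="(q,a)"]) auto
lemma gT_mh: "q \<in> QL \<Longrightarrow> (enc 1 q 0, h, flL q @ [h'], enc 2 q qRi) \<in> gT Sig h h' QL QR qLi qRi dL oL flL dR oR flR"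
  unfolding gT_def by blast
lemma gT_m2: "q \<in> QL \<Longrightarrow> r \<in> QR \<Longrightarrow> a \<in> Sig \<Longrightarrow> (enc 2 q r, a, oR r a, enc 2 q (dR r a)) \<in> gT Sig h h' QL QR qLi qRi dL oL flL dR oR flR"
  unfolding gT_def by (intro UnI1 UnI2 image_eqI[where x="(q,r,a)"]) auto
lemma gT_m3: "q \<in> QL \<Longrightarrow> r \<in> QR \<Longrightarrow> a \<in> Sig \<Longrightarrow> (enc 2 q r, a, oR r a @ flR (dR r a), enc 3 q (dR r a)) \<in> gT Sig h h' QL QR qLi qRi dL oL flL dR oR flR"
  unfolding gT_def by (intro UnI2 image_eqI[where x="(q,r,a)"]) auto

lemma gT_finite: "finite Sig \<Longrightarrow> finite QL \<Longrightarrow> finite QR \<Longrightarrow> finite (gT Sig h h' QL QR qLi qRi dL oL flL dR oR flR)"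
  unfolding gT_def by auto

context
  fixes Sig :: "nat set" and h h' :: nat and QL QR :: "nat set" and qLi qRi :: nat
    and dL dR :: "nat \<Rightarrow> nat \<Rightarrow> nat" and oL oR :: "nat \<Rightarrow> nat \<Rightarrow> nat list"
    and flL flR :: "nat \<Rightarrow> nat list" and Acc :: "nat \<Rightarrow> nat \<Rightarrow> bool"
  assumes hS: "h \<notin> Sig" and qLi: "qLi \<in> QL" and qRi: "qRi \<in> QR"
    and dLc: "\<And>q a. q \<in> QL \<Longrightarrow> a \<in> Sig \<Longrightarrow> dL q a \<in> QL"
    and dRc: "\<And>q a. q \<in> QR \<Longrightarrow> a \<in> Sig \<Longrightarrow> dR q a \<in> QR"
begin

abbreviation "TT \<equiv> gT Sig h h' QL QR qLi qRi dL oL flL dR oR flR"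

lemma run3: "gsm_run TT s w out s' \<Longrightarrow> s = enc 3 q r \<Longrightarrow> w = [] \<and> out = [] \<and> s' = s"
  by (induction rule: gsm_run.induct) (auto simp: gT_def)

lemma run2: "gsm_run TT s x out s' \<Longrightarrow> s = enc 2 q r \<Longrightarrow> q \<in> QL \<Longrightarrow> r \<in> QR \<Longrightarrow>
   (\<exists>q' r'. s' = enc 3 q' r') \<Longrightarrow>
   x \<noteq> [] \<and> set x \<subseteq> Sig \<and> out = tout dR oR flR r x \<and> s' = enc 3 q (foldl dR r x)"
proof (induction arbitrary: r rule: gsm_run.induct)
  case (gsm_nil q)
  then show ?case by auto
next
  case (gsm_step s a out s1 w out' s2)
  from gsm_step.prems gsm_step.hyps(1) have
    "(s1 = enc 2 q (dR r a) \<and> out = oR r a \<and> a \<in> Sig) \<or>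
     (s1 = enc 3 q (dR r a) \<and> out = oR r a @ flR (dR r a) \<and> a \<in> Sig)"
    by (auto simp: gT_def)
  then show ?case
  proof
    assume A: "s1 = enc 2 q (dR r a) \<and> out = oR r a \<and> a \<in> Sig"
    then have "dR r a \<in> QR" using dRc gsm_step.prems by auto
    with gsm_step.IH A gsm_step.prems show ?thesis by auto
  next
    assume A: "s1 = enc 3 q (dR r a) \<and> out = oR r a @ flR (dR r a) \<and> a \<in> Sig"
    with run3[OF gsm_step.hyps(2)] show ?thesis by auto
  qed
qed

lemma run2': "x \<noteq> [] \<Longrightarrow> set x \<subseteq> Sig \<Longrightarrow> q \<in> QL \<Longrightarrow> r \<in> QR \<Longrightarrow>
   gsm_run TT (enc 2 q r) x (tout dR oR flR r x) (enc 3 q (foldl dR r x))"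
proof (induction x arbitrary: r)
  case Nil then show ?case by simp
next
  case (Cons a w)
  show ?case
  proof (cases "w = []")
    case True
    have "(enc 2 q r, a, oR r a @ flR (dR r a), enc 3 q (dR r a)) \<in> TT"
      using Cons.prems by (intro gT_m3) auto
    then have "gsm_run TT (enc 2 q r) [a] ((oR r a @ flR (dR r a)) @ []) (enc 3 q (dR r a))"
      by (rule gsm_step) (rule gsm_nil)
    then show ?thesis using True by simp
  next
    case False
    have "(enc 2 q r, a, oR r a, enc 2 q (dR r a)) \<in> TT"
      using Cons.prems by (intro gT_m2) auto
    moreover have "dR r a \<in> QR" using dRc Cons.prems by auto
    ultimately show ?thesis using Cons False by (auto intro: gsm_step)
  qed
qed

lemma run1: "gsm_run TT s w out s' \<Longrightarrow> s = enc 1 q 0 \<Longrightarrow> q \<in> QL \<Longrightarrow>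
   (\<exists>q' r'. s' = enc 3 q' r') \<Longrightarrow>
   \<exists>u x. w = u @ [h] @ x \<and> set u \<subseteq> Sig \<and> x \<noteq> [] \<and> set x \<subseteq> Sig \<and>
     out = tout dL oL flL q u @ [h'] @ tout dR oR flR qRi x \<and> s' = enc 3 (foldl dL q u) (foldl dR qRi x)"
proof (induction arbitrary: q rule: gsm_run.induct)
  case (gsm_nil q)
  then show ?case by auto
next
  case (gsm_step s a out s1 w out' s2)
  from gsm_step.prems gsm_step.hyps(1) have
    "(s1 = enc 1 (dL q a) 0 \<and> out = oL q a \<and> a \<in> Sig) \<or>
     (s1 = enc 2 q qRi \<and> out = flL q @ [h'] \<and> a = h)"
    by (auto simp: gT_def)
  then show ?case
  proof
    assume A: "s1 = enc 1 (dL q a) 0 \<and> out = oL q a \<and> a \<in> Sig"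
    then have "dL q a \<in> QL" using dLc gsm_step.prems by auto
    with gsm_step.IH[of "dL q a"] A gsm_step.prems obtain u x where
      "w = u @ [h] @ x \<and> set u \<subseteq> Sig \<and> x \<noteq> [] \<and> set x \<subseteq> Sig \<and>
     out' = tout dL oL flL (dL q a) u @ [h'] @ tout dR oR flR qRi x \<and> s2 = enc 3 (foldl dL (dL q a) u) (foldl dR qRi x)"
      by blast
    then show ?thesis using A by (intro exI[of _ "a # u"] exI[of _ x]) auto
  next
    assume A: "s1 = enc 2 q qRi \<and> out = flL q @ [h'] \<and> a = h"
    from run2[OF gsm_step.hyps(2)] A gsm_step.prems qRi show ?thesis
      by (intro exI[of _ "[]"] exI[of _ w]) auto
  qed
qed

lemma run1': "set u \<subseteq> Sig \<Longrightarrow> x \<noteq> [] \<Longrightarrow> set x \<subseteq> Sig \<Longrightarrow> q \<in> QL \<Longrightarrow>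
   gsm_run TT (enc 1 q 0) (u @ [h] @ x) (tout dL oL flL q u @ [h'] @ tout dR oR flR qRi x)
     (enc 3 (foldl dL q u) (foldl dR qRi x))"
proof (induction u arbitrary: q)
  case Nil
  have "(enc 1 q 0, h, flL q @ [h'], enc 2 q qRi) \<in> TT"
    using Nil.prems by (intro gT_mh)
  from gsm_step[OF this run2'[OF Nil.prems(2,3,4) qRi]] show ?case by simp
next
  case (Cons a u)
  have "(enc 1 q 0, a, oL q a, enc 1 (dL q a) 0) \<in> TT"
    using Cons.prems by (intro gT_m1) auto
  moreover have "dL q a \<in> QL" using dLc Cons.prems by auto
  ultimately show ?case using Cons by (auto intro: gsm_step)
qed

lemma gen_sub1:
  assumes "w \<in> inv_gsm TT (enc 0 qLi 0) {enc 3 q r | q r. Acc q r} Lg"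
  shows "\<exists>u x. w = u @ [h] @ x \<and> u \<noteq> [] \<and> x \<noteq> [] \<and> set u \<subseteq> Sig \<and> set x \<subseteq> Sig \<and>
       Acc (foldl dL qLi u) (foldl dR qRi x) \<and>
       tout dL oL flL qLi u @ [h'] @ tout dR oR flR qRi x \<in> Lg"
proof -
  obtain out s where R: "gsm_run TT (enc 0 qLi 0) w out s" and F: "s \<in> {enc 3 q r | q r. Acc q r}"
      and O: "out \<in> Lg" using assms unfolding inv_gsm_def by blast
  from R show ?thesis
  proof cases
    case gsm_nil then show ?thesis using F by simp
  next
    case (gsm_step a out1 s1 w' out')
    have A: "s1 = enc 1 (dL qLi a) 0 \<and> out1 = oL qLi a \<and> a \<in> Sig"
      using gsm_step(3) by (auto simp: gT_def)
    then have "dL qLi a \<in> QL" using dLc qLi by auto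
    moreover have "\<exists>q' r'. s = enc 3 q' r'" using F by blast
    ultimately obtain u x where UX:
      "w' = u @ [h] @ x" "set u \<subseteq> Sig" "x \<noteq> []" "set x \<subseteq> Sig"
      "out' = tout dL oL flL (dL qLi a) u @ [h'] @ tout dR oR flR qRi x"
      "s = enc 3 (foldl dL (dL qLi a) u) (foldl dR qRi x)"
      using run1[OF gsm_step(4)] A by blast
    have "Acc (foldl dL qLi (a#u)) (foldl dR qRi x)" using F UX(6) by auto
    moreover have "tout dL oL flL qLi (a#u) @ [h'] @ tout dR oR flR qRi x \<in> Lg"
      using O gsm_step(2) A UX(5) by simp
    moreover have "w = (a#u) @ [h] @ x" using gsm_step(1) UX(1) by simp
    ultimately show ?thesis using A UX(2,3,4) by (intro exI[of _ "a#u"] exI[of _ x]) simp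
  qed
qed

lemma gen_sub2:
  assumes W: "w = u @ [h] @ x" "u \<noteq> []" "x \<noteq> []" "set u \<subseteq> Sig" "set x \<subseteq> Sig"
      "Acc (foldl dL qLi u) (foldl dR qRi x)"
      "tout dL oL flL qLi u @ [h'] @ tout dR oR flR qRi x \<in> Lg"
  shows "w \<in> inv_gsm TT (enc 0 qLi 0) {enc 3 q r | q r. Acc q r} Lg"
proof -
    obtain a u' where U: "u = a # u'" using W by (cases u) auto
    have T1: "(enc 0 qLi 0, a, oL qLi a, enc 1 (dL qLi a) 0) \<in> TT"
      using W U by (intro gT_m0) auto
    have "dL qLi a \<in> QL" using dLc qLi W U by auto
    with run1'[of u' x "dL qLi a"] W U have
      "gsm_run TT (enc 1 (dL qLi a) 0) (u' @ [h] @ x) (tout dL oL flL (dL qLi a) u' @ [h'] @ tout dR oR flR qRi x)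
     (enc 3 (foldl dL (dL qLi a) u') (foldl dR qRi x))" by auto
    from gsm_step[OF T1 this] W U have
      R: "gsm_run TT (enc 0 qLi 0) w (tout dL oL flL qLi u @ [h'] @ tout dR oR flR qRi x)
          (enc 3 (foldl dL qLi u) (foldl dR qRi x))" by simp
    have "enc 3 (foldl dL qLi u) (foldl dR qRi x) \<in> {enc 3 q r | q r. Acc q r}" using W(6) by blast
    with R W(7) show ?thesis unfolding inv_gsm_def by blast
qed

lemma gen_lang:
  "inv_gsm TT (enc 0 qLi 0) {enc 3 q r | q r. Acc q r} Lg =
   {u @ [h] @ x | u x. u \<noteq> [] \<and> x \<noteq> [] \<and> set u \<subseteq> Sig \<and> set x \<subseteq> Sig \<and>
       Acc (foldl dL qLi u) (foldl dR qRi x) \<and>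
       tout dL oL flL qLi u @ [h'] @ tout dR oR flR qRi x \<in> Lg}"
  (is "?A = ?B")
proof (rule set_eqI)
  fix w
  show "w \<in> ?A \<longleftrightarrow> w \<in> ?B"
  proof
    assume "w \<in> ?A"
    from gen_sub1[OF this] show "w \<in> ?B" by (simp only: mem_Collect_eq)
  next
    assume "w \<in> ?B"
    then obtain u x where "w = u @ [h] @ x" "u \<noteq> []" "x \<noteq> []" "set u \<subseteq> Sig" "set x \<subseteq> Sig"
      "Acc (foldl dL qLi u) (foldl dR qRi x)"
      "tout dL oL flL qLi u @ [h'] @ tout dR oR flR qRi x \<in> Lg" by (auto simp only: mem_Collect_eq)
    from gen_sub2[OF this] show "w \<in> ?A" .
  qed
qed

end

lemma gen_in_C:
  assumes "closed_inv_gsm C" "Lg \<in> C" "finite Sig" "finite QL" "finite QR"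
    "h \<notin> Sig" "qLi \<in> QL" "qRi \<in> QR"
    "\<And>q a. q \<in> QL \<Longrightarrow> a \<in> Sig \<Longrightarrow> dL q a \<in> QL"
    "\<And>q a. q \<in> QR \<Longrightarrow> a \<in> Sig \<Longrightarrow> dR q a \<in> QR"
  shows "{u @ [h] @ x | u x. u \<noteq> [] \<and> x \<noteq> [] \<and> set u \<subseteq> Sig \<and> set x \<subseteq> Sig \<and>
       Acc (foldl dL qLi u) (foldl dR qRi x) \<and>
       tout dL oL flL qLi u @ [h'] @ tout dR oR flR qRi x \<in> Lg} \<in> C"
proof -
  have "inv_gsm (gT Sig h h' QL QR qLi qRi dL oL flL dR oR flR) (enc 0 qLi 0) {enc 3 q r | q r. Acc q r} Lg \<in> C"
  proof -
    have "finite (gT Sig h h' QL QR qLi qRi dL oL flL dR oR flR)" using assms(3-5) by (rule gT_finite)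
    with assms(1,2) show ?thesis unfolding closed_inv_gsm_def by blast
  qed
  then show ?thesis by (subst (asm) gen_lang[OF assms(6-10)])
qed



lemma semi_closed: "is_semigroup S m \<Longrightarrow> x \<in> S \<Longrightarrow> y \<in> S \<Longrightarrow> m x y \<in> S"
  unfolding is_semigroup_def by blast
lemma semi_assoc: "is_semigroup S m \<Longrightarrow> x \<in> S \<Longrightarrow> y \<in> S \<Longrightarrow> z \<in> S \<Longrightarrow> m (m x y) z = m x (m y z)"
  unfolding is_semigroup_def by blast

lemma we_cons: "w \<noteq> [] \<Longrightarrow> word_eval m f (a # w) = m (f a) (word_eval m f w)"
  by (cases w) auto

lemma we_in: "is_semigroup S m \<Longrightarrow> w \<noteq> [] \<Longrightarrow> \<forall>a\<in>set w. f a \<in> S \<Longrightarrow> word_eval m f w \<in> S"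
proof (induction w)
  case Nil then show ?case by simp
next
  case (Cons a w) then show ?case
    by (cases "w = []") (auto simp: we_cons intro: semi_closed[of S m])
qed

lemma we_app: "is_semigroup S m \<Longrightarrow> u \<noteq> [] \<Longrightarrow> v \<noteq> [] \<Longrightarrow> \<forall>a\<in>set u \<union> set v. f a \<in> S \<Longrightarrow>
   word_eval m f (u @ v) = m (word_eval m f u) (word_eval m f v)"
proof (induction u)
  case Nil then show ?case by simp
next
  case (Cons a u)
  show ?case
  proof (cases "u = []")
    case True then show ?thesis using Cons by (simp add: we_cons)
  next
    case False
    have "word_eval m f ((a # u) @ v) = m (f a) (word_eval m f (u @ v))"
      using Cons.prems by (simp add: we_cons)
    also have "\<dots> = m (f a) (m (word_eval m f u) (word_eval m f v))"
      using Cons False by simp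
    also have "\<dots> = m (m (f a) (word_eval m f u)) (word_eval m f v)"
      using Cons.prems False by (intro semi_assoc[symmetric] we_in) auto
    also have "\<dots> = m (word_eval m f (a # u)) (word_eval m f v)"
      using False by (simp add: we_cons)
    finally show ?thesis .
  qed
qed

lemma gen_sub': "x \<in> gen_by m A \<Longrightarrow> is_semigroup S m \<Longrightarrow> A \<subseteq> S \<Longrightarrow> x \<in> S"
proof (induction rule: gen_by.induct)
  case (gen_base a) then show ?case by blast
next
  case (gen_mult x y) then show ?case using semi_closed[of S m x y] by blast
qed

lemma gen_sub: "is_semigroup S m \<Longrightarrow> A \<subseteq> S \<Longrightarrow> gen_by m A \<subseteq> S"
  by (rule subsetI, erule (2) gen_sub'[rotated])

lemma gen_words: "x \<in> gen_by m (f ` Sg) \<Longrightarrow> is_semigroup S m \<Longrightarrow> f ` Sg \<subseteq> S \<Longrightarrow>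
   \<exists>w. w \<noteq> [] \<and> set w \<subseteq> Sg \<and> word_eval m f w = x"
proof (induction rule: gen_by.induct)
  case (gen_base a)
  then obtain s where s: "s \<in> Sg" "a = f s" by blast
  have "[s] \<noteq> [] \<and> set [s] \<subseteq> Sg \<and> word_eval m f [s] = a" using s by simp
  then show ?case by (rule exI)
next
  case (gen_mult x y)
  obtain w1 where w1: "w1 \<noteq> []" "set w1 \<subseteq> Sg" "word_eval m f w1 = x"
    using gen_mult.IH(1) gen_mult.prems by blast
  obtain w2 where w2: "w2 \<noteq> []" "set w2 \<subseteq> Sg" "word_eval m f w2 = y"
    using gen_mult.IH(2) gen_mult.prems by blast
  have fs: "\<forall>a\<in>set w1 \<union> set w2. f a \<in> S" using w1(2) w2(2) gen_mult.prems(2) by blast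
  have "word_eval m f (w1 @ w2) = m (word_eval m f w1) (word_eval m f w2)"
    by (rule we_app[OF gen_mult.prems(1) w1(1) w2(1) fs])
  then have "w1 @ w2 \<noteq> [] \<and> set (w1 @ w2) \<subseteq> Sg \<and> word_eval m f (w1 @ w2) = m x y"
    using w1 w2 by simp
  then show ?case by (rule exI)
qed

lemma rees_semi:
  assumes "is_semigroup S m" "\<forall>l\<in>L. \<forall>i\<in>I. P l i \<in> S"
  shows "is_semigroup (rees_carrier S I L) (rees_mult m P)"
  unfolding is_semigroup_def
proof (intro conjI ballI)
  fix x y assume "x \<in> rees_carrier S I L" "y \<in> rees_carrier S I L"
  then show "rees_mult m P x y \<in> rees_carrier S I L"
    using assms semi_closed[OF assms(1)] by (auto simp: rees_carrier_def rees_mult_def)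
next
  fix x y z assume X: "x \<in> rees_carrier S I L" "y \<in> rees_carrier S I L" "z \<in> rees_carrier S I L"
  obtain i1 x1 l1 where "x = (i1, x1, l1)" by (cases x) auto
  moreover obtain i2 x2 l2 where "y = (i2, x2, l2)" by (cases y) auto
  moreover obtain i3 x3 l3 where "z = (i3, x3, l3)" by (cases z) auto
  ultimately have E: "x = (i1, x1, l1)" "y = (i2, x2, l2)" "z = (i3, x3, l3)" by auto
  have M: "i1 \<in> I" "i2 \<in> I" "i3 \<in> I" "x1 \<in> S" "x2 \<in> S" "x3 \<in> S" "l1 \<in> L" "l2 \<in> L" "l3 \<in> L"
    using X E by (auto simp: rees_carrier_def)
  have p1: "P l1 i2 \<in> S" and p2: "P l2 i3 \<in> S" using M assms(2) by auto
  note cl = semi_closed[OF assms(1)] and as = semi_assoc[OF assms(1)]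
  have "m (m (m (m x1 (P l1 i2)) x2) (P l2 i3)) x3 = m (m x1 (P l1 i2)) (m (m x2 (P l2 i3)) x3)"
    using M p1 p2 cl as by metis
  then show "rees_mult m P (rees_mult m P x y) z = rees_mult m P x (rees_mult m P y z)"
    using E by (simp add: rees_mult_def)
qed

lemma parse_h: "h \<notin> set U \<Longrightarrow> h \<notin> set u \<Longrightarrow> U @ h # X = u @ h # Y \<Longrightarrow> U = u \<and> X = Y"
proof (induction U arbitrary: u)
  case Nil then show ?case by (cases u) auto
next
  case (Cons a U) then show ?case by (cases u) auto
qed

lemma wp_mem:
  assumes "h \<notin> Sg" "U \<noteq> []" "set U \<subseteq> Sg" "set X \<subseteq> Sg"
  shows "U @ [h] @ X \<in> word_problem m f Sg h \<longleftrightarrow> X \<noteq> [] \<and> word_eval m f U = word_eval m f (rev X)"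
proof
  assume "U @ [h] @ X \<in> word_problem m f Sg h"
  then obtain u v where A: "U @ [h] @ X = u @ [h] @ rev v" "u \<noteq> []" "v \<noteq> []" "set u \<subseteq> Sg" "set v \<subseteq> Sg"
    "word_eval m f u = word_eval m f v" unfolding word_problem_def by blast
  have "h \<notin> set U" "h \<notin> set u" using assms A by auto
  with A(1) have "U = u \<and> X = rev v" using parse_h by simp
  then show "X \<noteq> [] \<and> word_eval m f U = word_eval m f (rev X)" using A by simp
next
  assume "X \<noteq> [] \<and> word_eval m f U = word_eval m f (rev X)"
  then show "U @ [h] @ X \<in> word_problem m f Sg h" unfolding word_problem_def using assms
    by (intro CollectI exI[of _ U] exI[of _ "rev X"]) auto
qed

lemma wp_alt: "word_problem m f Sg h =
   {u @ [h] @ x | u x. u \<noteq> [] \<and> x \<noteq> [] \<and> set u \<subseteq> Sg \<and> set x \<subseteq> Sg \<and> word_eval m f u = word_eval m f (rev x)}"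
  unfolding word_problem_def
  apply (rule set_eqI)
  apply (simp only: mem_Collect_eq)
  apply (rule iffI)
   apply (elim exE conjE)
  subgoal for w u v by (rule exI[of _ u], rule exI[of _ "rev v"]) simp
  apply (elim exE conjE)
  subgoal for w u v by (rule exI[of _ u], rule exI[of _ "rev v"]) simp
  done



lemma rm_eq: "rees_mult m P a b = (fst a, m (m (fst (snd a)) (P (snd (snd a)) (fst b))) (fst (snd b)), snd (snd b))"
  by (cases a; cases b) (simp add: rees_mult_def)

lemma eM_fst: "w \<noteq> [] \<Longrightarrow> fst (word_eval (rees_mult m P) fM w) = fst (fM (hd w))"
  by (induction "rees_mult m P" fM w rule: word_eval.induct) (auto simp: rm_eq)

lemma eM_last: "w \<noteq> [] \<Longrightarrow> snd (snd (word_eval (rees_mult m P) fM w)) = snd (snd (fM (last w)))"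
  by (induction "rees_mult m P" fM w rule: word_eval.induct) (auto simp: rm_eq)

context
  fixes S :: "'a set" and m and I :: "'i set" and L :: "'l set" and P
    and Sg :: "nat set" and f :: "nat \<Rightarrow> 'a" and SgM :: "nat set" and fM :: "nat \<Rightarrow> 'i \<times> 'a \<times> 'l"
  assumes semi: "is_semigroup S m" and Pin: "\<forall>l\<in>L. \<forall>i\<in>I. P l i \<in> S"
    and fS: "f ` Sg \<subseteq> S" and genS: "gen_by m (f ` Sg) = S"
    and fMM: "fM ` SgM \<subseteq> rees_carrier S I L"
begin

definition "wd x = (SOME w. w \<noteq> [] \<and> set w \<subseteq> Sg \<and> word_eval m f w = x)"

lemma wd: "x \<in> S \<Longrightarrow> wd x \<noteq> [] \<and> set (wd x) \<subseteq> Sg \<and> word_eval m f (wd x) = x"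
proof -
  assume "x \<in> S"
  then have "x \<in> gen_by m (f ` Sg)" using genS by simp
  from gen_words[OF this semi fS] show ?thesis unfolding wd_def by (rule someI_ex)
qed

abbreviation "fi a \<equiv> fst (fM a)"
abbreviation "fm a \<equiv> fst (snd (fM a))"
abbreviation "fl a \<equiv> snd (snd (fM a))"
abbreviation "eM \<equiv> word_eval (rees_mult m P) fM"

lemma fM_mem: "a \<in> SgM \<Longrightarrow> fi a \<in> I \<and> fm a \<in> S \<and> fl a \<in> L"
  using fMM by (auto simp: rees_carrier_def)

lemma semiM: "is_semigroup (rees_carrier S I L) (rees_mult m P)"
  by (rule rees_semi[OF semi Pin])

lemma eM_in: "w \<noteq> [] \<Longrightarrow> set w \<subseteq> SgM \<Longrightarrow> eM w \<in> rees_carrier S I L"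
  using fMM by (intro we_in[OF semiM]) auto

lemma eM_app: "u \<noteq> [] \<Longrightarrow> v \<noteq> [] \<Longrightarrow> set u \<subseteq> SgM \<Longrightarrow> set v \<subseteq> SgM \<Longrightarrow>
   eM (u @ v) = rees_mult m P (eM u) (eM v)"
  using fMM by (intro we_app[OF semiM]) auto

lemma eS_app: "u \<noteq> [] \<Longrightarrow> v \<noteq> [] \<Longrightarrow> set u \<subseteq> Sg \<Longrightarrow> set v \<subseteq> Sg \<Longrightarrow>
   word_eval m f (u @ v) = m (word_eval m f u) (word_eval m f v)"
  using fS by (intro we_app[OF semi]) auto

lemma eS_in: "u \<noteq> [] \<Longrightarrow> set u \<subseteq> Sg \<Longrightarrow> word_eval m f u \<in> S"
  using fS by (intro we_in[OF semi]) auto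

definition "dL1 q a = (case q of 0 \<Rightarrow> Suc (prod_encode (a, a)) | Suc k \<Rightarrow> Suc (prod_encode (fst (prod_decode k), a)))"
definition "oL1 q a = (case q of 0 \<Rightarrow> wd (fm a) | Suc k \<Rightarrow> wd (P (fl (snd (prod_decode k))) (fi a)) @ wd (fm a))"
definition "oR1 q a = (case q of 0 \<Rightarrow> rev (wd (fm a)) | Suc k \<Rightarrow> rev (wd (fm a) @ wd (P (fl a) (fi (snd (prod_decode k))))))"
definition "Acc1 qL qR = (case qL of 0 \<Rightarrow> False | Suc k \<Rightarrow> (case qR of 0 \<Rightarrow> False | Suc k' \<Rightarrow>
     fi (fst (prod_decode k)) = fi (snd (prod_decode k')) \<and> fl (snd (prod_decode k)) = fl (fst (prod_decode k'))))"
definition "QQ = insert 0 ((\<lambda>p. Suc (prod_encode p)) ` (SgM \<times> SgM))"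
abbreviation "st a g \<equiv> Suc (prod_encode (a, g))"
abbreviation "fl0 \<equiv> (\<lambda>q::nat. ([] :: nat list))"

lemma QQ_fin: "finite SgM \<Longrightarrow> finite QQ" unfolding QQ_def by simp

lemma QQ_cl: "q \<in> QQ \<Longrightarrow> a \<in> SgM \<Longrightarrow> dL1 q a \<in> QQ"
  unfolding QQ_def dL1_def by (auto split: nat.split)

lemma fold1: "set w \<subseteq> SgM \<Longrightarrow> foldl dL1 (st a g) w = st a (last (g # w))"
  by (induction w arbitrary: g) (auto simp: dL1_def)

lemma fold0: "u \<noteq> [] \<Longrightarrow> set u \<subseteq> SgM \<Longrightarrow> foldl dL1 0 u = st (hd u) (last u)"
  by (cases u) (auto simp: dL1_def fold1)

lemma toutL: "g \<in> SgM \<Longrightarrow> set w \<subseteq> SgM \<Longrightarrow>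
   set (tout dL1 oL1 fl0 (st a g) w) \<subseteq> Sg \<and>
   word_eval m f (wd (fm g) @ tout dL1 oL1 fl0 (st a g) w) = fst (snd (eM (g # w)))"
proof (induction w arbitrary: g)
  case Nil
  then show ?case using wd fM_mem by simp
next
  case (Cons b w)
  have b: "b \<in> SgM" "set w \<subseteq> SgM" using Cons.prems by auto
  have pS: "P (fl g) (fi b) \<in> S" using Pin fM_mem Cons.prems b by blast
  have gS: "fm g \<in> S" using fM_mem Cons.prems by blast
  have IH: "set (tout dL1 oL1 fl0 (st a b) w) \<subseteq> Sg"
     "word_eval m f (wd (fm b) @ tout dL1 oL1 fl0 (st a b) w) = fst (snd (eM (b # w)))"
    using Cons.IH[OF b(1) b(2)] by auto
  have T: "tout dL1 oL1 fl0 (st a g) (b # w) = wd (P (fl g) (fi b)) @ (wd (fm b) @ tout dL1 oL1 fl0 (st a b) w)"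
    by (simp add: dL1_def oL1_def)
  have W1: "wd (P (fl g) (fi b)) \<noteq> []" "set (wd (P (fl g) (fi b))) \<subseteq> Sg" "word_eval m f (wd (P (fl g) (fi b))) = P (fl g) (fi b)"
    using wd[OF pS] by auto
  have W2: "wd (fm g) \<noteq> []" "set (wd (fm g)) \<subseteq> Sg" "word_eval m f (wd (fm g)) = fm g"
    using wd[OF gS] by auto
  have W3: "wd (fm b) \<noteq> []" "set (wd (fm b)) \<subseteq> Sg"
    using wd fM_mem b by auto
  let ?R = "wd (fm b) @ tout dL1 oL1 fl0 (st a b) w"
  have R: "?R \<noteq> []" "set ?R \<subseteq> Sg" using W3 IH by auto
  have "word_eval m f (wd (fm g) @ wd (P (fl g) (fi b)) @ ?R) =
        m (fm g) (m (P (fl g) (fi b)) (fst (snd (eM (b # w)))))"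
    using W1 W2 R IH by (simp add: eS_app)
  also have "\<dots> = m (m (fm g) (P (fl g) (fi b))) (fst (snd (eM (b # w))))"
  proof -
    have "eM (b # w) \<in> rees_carrier S I L" using eM_in[of "b # w"] b by simp
    then have zS: "fst (snd (eM (b # w))) \<in> S" by (auto simp: rees_carrier_def)
    show ?thesis using semi_assoc[OF semi gS pS zS] by simp
  qed
  also have "\<dots> = fst (snd (eM (g # b # w)))"
    using eM_fst[of "b # w" m P fM] by (simp add: rm_eq)
  finally show ?case using T W1 W3 IH by simp
qed

lemma outL: "u \<noteq> [] \<Longrightarrow> set u \<subseteq> SgM \<Longrightarrow>
   tout dL1 oL1 fl0 0 u \<noteq> [] \<and> set (tout dL1 oL1 fl0 0 u) \<subseteq> Sg \<and>
   word_eval m f (tout dL1 oL1 fl0 0 u) = fst (snd (eM u))"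
proof (cases u)
  case (Cons a w)
  assume "set u \<subseteq> SgM"
  then have a: "a \<in> SgM" "set w \<subseteq> SgM" using Cons by auto
  have "tout dL1 oL1 fl0 0 u = wd (fm a) @ tout dL1 oL1 fl0 (st a a) w"
    using Cons by (simp add: dL1_def oL1_def)
  moreover have "wd (fm a) \<noteq> []" "set (wd (fm a)) \<subseteq> Sg" using wd fM_mem a by auto
  ultimately show ?thesis using toutL[OF a] Cons by simp
qed simp

lemma toutR: "g \<in> SgM \<Longrightarrow> set x \<subseteq> SgM \<Longrightarrow>
   set (tout dL1 oR1 fl0 (st a g) x) \<subseteq> Sg \<and>
   word_eval m f (rev (tout dL1 oR1 fl0 (st a g) x) @ wd (fm g)) = fst (snd (eM (rev x @ [g])))"
proof (induction x arbitrary: g)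
  case Nil
  then show ?case using wd fM_mem by simp
next
  case (Cons b x)
  have b: "b \<in> SgM" "set x \<subseteq> SgM" using Cons.prems by auto
  have pS: "P (fl b) (fi g) \<in> S" using Pin fM_mem Cons.prems b by blast
  have gS: "fm g \<in> S" using fM_mem Cons.prems by blast
  have IH: "set (tout dL1 oR1 fl0 (st a b) x) \<subseteq> Sg"
     "word_eval m f (rev (tout dL1 oR1 fl0 (st a b) x) @ wd (fm b)) = fst (snd (eM (rev x @ [b])))"
    using Cons.IH[OF b(1) b(2)] by auto
  have T: "tout dL1 oR1 fl0 (st a g) (b # x) = rev (wd (fm b) @ wd (P (fl b) (fi g))) @ tout dL1 oR1 fl0 (st a b) x"
    by (simp add: dL1_def oR1_def)
  have W1: "wd (P (fl b) (fi g)) \<noteq> []" "set (wd (P (fl b) (fi g))) \<subseteq> Sg" "word_eval m f (wd (P (fl b) (fi g))) = P (fl b) (fi g)"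
    using wd[OF pS] by auto
  have W2: "wd (fm g) \<noteq> []" "set (wd (fm g)) \<subseteq> Sg" "word_eval m f (wd (fm g)) = fm g"
    using wd[OF gS] by auto
  have W3: "wd (fm b) \<noteq> []" "set (wd (fm b)) \<subseteq> Sg"
    using wd fM_mem b by auto
  let ?R = "rev (tout dL1 oR1 fl0 (st a b) x) @ wd (fm b)"
  have R: "?R \<noteq> []" "set ?R \<subseteq> Sg" using W3 IH by auto
  have E: "rev (tout dL1 oR1 fl0 (st a g) (b # x)) @ wd (fm g) = ?R @ (wd (P (fl b) (fi g)) @ wd (fm g))"
    using T by simp
  have ein: "eM (rev x @ [b]) \<in> rees_carrier S I L" using eM_in[of "rev x @ [b]"] b by auto
  have "word_eval m f (?R @ (wd (P (fl b) (fi g)) @ wd (fm g))) =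
        m (fst (snd (eM (rev x @ [b])))) (m (P (fl b) (fi g)) (fm g))"
  proof -
    have "word_eval m f (?R @ (wd (P (fl b) (fi g)) @ wd (fm g))) =
       m (word_eval m f ?R) (word_eval m f (wd (P (fl b) (fi g)) @ wd (fm g)))"
      using W1 W2 R by (intro eS_app) auto
    also have "word_eval m f (wd (P (fl b) (fi g)) @ wd (fm g)) = m (P (fl b) (fi g)) (fm g)"
      using W1 W2 by (simp add: eS_app)
    finally show ?thesis using IH by simp
  qed
  also have "\<dots> = m (m (fst (snd (eM (rev x @ [b])))) (P (fl b) (fi g))) (fm g)"
  proof -
    have zS: "fst (snd (eM (rev x @ [b]))) \<in> S" using ein by (auto simp: rees_carrier_def)
    show ?thesis using semi_assoc[OF semi zS pS gS] by simp
  qed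
  also have "\<dots> = fst (snd (eM (rev (b # x) @ [g])))"
  proof -
    have "eM (rev (b # x) @ [g]) = rees_mult m P (eM (rev x @ [b])) (fM g)"
      using eM_app[of "rev x @ [b]" "[g]"] b Cons.prems by simp
    moreover have "snd (snd (eM (rev x @ [b]))) = fl b" using eM_last[of "rev x @ [b]" m P fM] by simp
    ultimately show ?thesis by (simp add: rm_eq)
  qed
  finally show ?case using E T W1 W3 IH by simp
qed

lemma outR: "x \<noteq> [] \<Longrightarrow> set x \<subseteq> SgM \<Longrightarrow>
   tout dL1 oR1 fl0 0 x \<noteq> [] \<and> set (tout dL1 oR1 fl0 0 x) \<subseteq> Sg \<and>
   word_eval m f (rev (tout dL1 oR1 fl0 0 x)) = fst (snd (eM (rev x)))"
proof (cases x)
  case (Cons a w)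
  assume "set x \<subseteq> SgM"
  then have a: "a \<in> SgM" "set w \<subseteq> SgM" using Cons by auto
  have "tout dL1 oR1 fl0 0 x = rev (wd (fm a)) @ tout dL1 oR1 fl0 (st a a) w"
    using Cons by (simp add: dL1_def oR1_def)
  moreover have "wd (fm a) \<noteq> []" "set (wd (fm a)) \<subseteq> Sg" using wd fM_mem a by auto
  ultimately show ?thesis using toutR[OF a] Cons by simp
qed simp

lemma cond_eq:
  assumes hS: "h \<notin> Sg" and u: "u \<noteq> []" "set u \<subseteq> SgM" and x: "x \<noteq> []" "set x \<subseteq> SgM"
  shows "(eM u = eM (rev x)) \<longleftrightarrow>
    (Acc1 (foldl dL1 0 u) (foldl dL1 0 x) \<and> tout dL1 oL1 fl0 0 u @ [h] @ tout dL1 oR1 fl0 0 x \<in> word_problem m f Sg h)"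
proof -
  have A: "Acc1 (foldl dL1 0 u) (foldl dL1 0 x) \<longleftrightarrow> fi (hd u) = fi (last x) \<and> fl (last u) = fl (hd x)"
    using fold0[OF u] fold0[OF x] by (simp add: Acc1_def)
  have W: "tout dL1 oL1 fl0 0 u @ [h] @ tout dL1 oR1 fl0 0 x \<in> word_problem m f Sg h \<longleftrightarrow>
     fst (snd (eM u)) = fst (snd (eM (rev x)))"
    using wp_mem[OF hS, of "tout dL1 oL1 fl0 0 u" "tout dL1 oR1 fl0 0 x" m f] outL[OF u] outR[OF x] by simp
  have E1: "eM u = (fi (hd u), fst (snd (eM u)), fl (last u))"
    using eM_fst[OF u(1), of m P fM] eM_last[OF u(1), of m P fM] by (metis prod.collapse)
  have rx: "rev x \<noteq> []" using x by simp
  have E2: "eM (rev x) = (fi (last x), fst (snd (eM (rev x))), fl (hd x))"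
    using eM_fst[OF rx, of m P fM] eM_last[OF rx, of m P fM] by (simp add: hd_rev last_rev) (metis prod.collapse)
  show ?thesis
    apply (subst E1, subst E2) using A W by auto
qed

lemma dir1_lang:
  assumes hS: "h \<notin> Sg" and hM: "hM \<notin> SgM"
  shows "word_problem (rees_mult m P) fM SgM hM =
   {u @ [hM] @ x | u x. u \<noteq> [] \<and> x \<noteq> [] \<and> set u \<subseteq> SgM \<and> set x \<subseteq> SgM \<and>
       Acc1 (foldl dL1 0 u) (foldl dL1 0 x) \<and>
       tout dL1 oL1 fl0 0 u @ [h] @ tout dL1 oR1 fl0 0 x \<in> word_problem m f Sg h}"
  apply (rule set_eqI)
  apply (simp only: wp_alt[of "rees_mult m P" fM SgM hM] mem_Collect_eq)
  apply (rule iffI; elim exE conjE)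
  subgoal for w u x by (rule exI[of _ u], rule exI[of _ x]) (simp add: cond_eq[OF hS])
  subgoal for w u x by (rule exI[of _ u], rule exI[of _ x]) (simp add: cond_eq[OF hS])
  done

lemma dir1:
  assumes C: "closed_inv_gsm C" "word_problem m f Sg h \<in> C" and hS: "h \<notin> Sg" and hM: "hM \<notin> SgM"
    and fin: "finite SgM"
  shows "word_problem (rees_mult m P) fM SgM hM \<in> C"
proof -
  have q0: "0 \<in> QQ" by (simp add: QQ_def)
  show ?thesis unfolding dir1_lang[OF hS hM]
    by (rule gen_in_C[OF C fin QQ_fin[OF fin] QQ_fin[OF fin] hM q0 q0 QQ_cl QQ_cl])
qed

end


context
  fixes S :: "'a set" and m and I :: "'i set" and L :: "'l set" and P
    and SgM :: "nat set" and fM :: "nat \<Rightarrow> 'i \<times> 'a \<times> 'l" and SgS :: "nat set" and fS :: "nat \<Rightarrow> 'a"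
    and i0 :: 'i and l0 :: 'l
  assumes semi: "is_semigroup S m" and Pin: "\<forall>l\<in>L. \<forall>i\<in>I. P l i \<in> S"
    and fMM: "fM ` SgM \<subseteq> rees_carrier S I L" and genM: "gen_by (rees_mult m P) (fM ` SgM) = rees_carrier S I L"
    and fSS: "fS ` SgS \<subseteq> S" and i0: "i0 \<in> I" and l0: "l0 \<in> L"
begin

abbreviation "fi2 a \<equiv> fst (fM a)"
abbreviation "fm2 a \<equiv> fst (snd (fM a))"
abbreviation "fl2 a \<equiv> snd (snd (fM a))"
abbreviation "eM2 \<equiv> word_eval (rees_mult m P) fM"
abbreviation "eS \<equiv> word_eval m fS"

lemma fM_mem2: "a \<in> SgM \<Longrightarrow> fi2 a \<in> I \<and> fm2 a \<in> S \<and> fl2 a \<in> L"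
  using fMM by (auto simp: rees_carrier_def)

lemma semiM2: "is_semigroup (rees_carrier S I L) (rees_mult m P)"
  by (rule rees_semi[OF semi Pin])

lemma eM_in2: "w \<noteq> [] \<Longrightarrow> set w \<subseteq> SgM \<Longrightarrow> eM2 w \<in> rees_carrier S I L"
  using fMM by (intro we_in[OF semiM2]) auto

lemma eM_mid2: "w \<noteq> [] \<Longrightarrow> set w \<subseteq> SgM \<Longrightarrow> fst (snd (eM2 w)) \<in> S"
proof -
  assume "w \<noteq> []" "set w \<subseteq> SgM"
  from eM_in2[OF this] show ?thesis by (auto simp: rees_carrier_def mem_Times_iff)
qed

lemma eM_app2: "u \<noteq> [] \<Longrightarrow> v \<noteq> [] \<Longrightarrow> set u \<subseteq> SgM \<Longrightarrow> set v \<subseteq> SgM \<Longrightarrow>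
   eM2 (u @ v) = rees_mult m P (eM2 u) (eM2 v)"
  using fMM by (intro we_app[OF semiM2]) auto

lemma eS_app2: "u \<noteq> [] \<Longrightarrow> v \<noteq> [] \<Longrightarrow> set u \<subseteq> SgS \<Longrightarrow> set v \<subseteq> SgS \<Longrightarrow>
   eS (u @ v) = m (eS u) (eS v)"
  using fSS by (intro we_app[OF semi]) auto

lemma eS_in2: "u \<noteq> [] \<Longrightarrow> set u \<subseteq> SgS \<Longrightarrow> eS u \<in> S"
  using fSS by (intro we_in[OF semi]) auto

definition "rep t = (SOME W. W \<noteq> [] \<and> set W \<subseteq> SgM \<and> eM2 W = t)"

lemma rep: "t \<in> rees_carrier S I L \<Longrightarrow> rep t \<noteq> [] \<and> set (rep t) \<subseteq> SgM \<and> eM2 (rep t) = t"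
proof -
  assume "t \<in> rees_carrier S I L"
  then have "t \<in> gen_by (rees_mult m P) (fM ` SgM)" using genM by simp
  from gen_words[OF this semiM2 fMM] show ?thesis unfolding rep_def by (rule someI_ex)
qed

definition "lt q c = (case q of 0 \<Rightarrow> (i0, fS c, l0) | Suc g \<Rightarrow> (fi2 g, m (fm2 g) (fS c), l0))"
definition "rt q c = (case q of 0 \<Rightarrow> (i0, fS c, l0) | Suc g \<Rightarrow> (i0, m (fS c) (fm2 g), fl2 g))"
definition "dL2 q c = Suc (last (rep (lt q c)))"
definition "oL2 q c = butlast (rep (lt q c))"
definition "dR2 q c = Suc (hd (rep (rt q c)))"
definition "oR2 q c = rev (tl (rep (rt q c)))"
definition "flG q = (case q of 0 \<Rightarrow> [] | Suc g \<Rightarrow> [g])"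
definition "Q2 = insert 0 (Suc ` SgM)"

lemma Q2_fin: "finite SgM \<Longrightarrow> finite Q2" unfolding Q2_def by simp

lemma lt_in: "q \<in> Q2 \<Longrightarrow> c \<in> SgS \<Longrightarrow> lt q c \<in> rees_carrier S I L"
  using fM_mem2 fSS i0 l0 semi_closed[OF semi] unfolding Q2_def lt_def by (auto simp: rees_carrier_def)

lemma rt_in: "q \<in> Q2 \<Longrightarrow> c \<in> SgS \<Longrightarrow> rt q c \<in> rees_carrier S I L"
  using fM_mem2 fSS i0 l0 semi_closed[OF semi] unfolding Q2_def rt_def by (auto simp: rees_carrier_def)

lemma Q2_clL: "q \<in> Q2 \<Longrightarrow> c \<in> SgS \<Longrightarrow> dL2 q c \<in> Q2"
proof -
  assume "q \<in> Q2" "c \<in> SgS"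
  from rep[OF lt_in[OF this]] have "last (rep (lt q c)) \<in> SgM" by auto
  then show ?thesis unfolding dL2_def Q2_def by simp
qed

lemma Q2_clR: "q \<in> Q2 \<Longrightarrow> c \<in> SgS \<Longrightarrow> dR2 q c \<in> Q2"
proof -
  assume "q \<in> Q2" "c \<in> SgS"
  from rep[OF rt_in[OF this]] have "hd (rep (rt q c)) \<in> SgM" by auto
  then show ?thesis unfolding dR2_def Q2_def by simp
qed

lemma ext_right:
  assumes g: "g \<in> SgM" and Os: "set Os \<subseteq> SgM" and W: "W \<noteq> []" "set W \<subseteq> SgM"
    and E: "eM2 W = (fi2 g, m (fm2 g) y, l')" and y: "y \<in> S"
  shows "eM2 (Os @ W) = (fst (eM2 (Os @ [g])), m (fst (snd (eM2 (Os @ [g])))) y, l')"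
proof (cases "Os = []")
  case True then show ?thesis using E by simp
next
  case False
  have gS: "fm2 g \<in> S" using fM_mem2 g by blast
  have oS: "fst (snd (eM2 Os)) \<in> S" using eM_mid2[OF False Os] .
  have pS: "P (snd (snd (eM2 Os))) (fi2 g) \<in> S"
    using eM_in2[OF False Os] fM_mem2[OF g] Pin by (auto simp: rees_carrier_def)
  have A: "eM2 (Os @ W) = rees_mult m P (eM2 Os) (eM2 W)" using eM_app2[OF False W(1) Os W(2)] .
  have B: "eM2 (Os @ [g]) = rees_mult m P (eM2 Os) (fM g)" using eM_app2[OF False _ Os, of "[g]"] g by simp
  have "m (m (fst (snd (eM2 Os))) (P (snd (snd (eM2 Os))) (fi2 g))) (m (fm2 g) y) =
        m (m (m (fst (snd (eM2 Os))) (P (snd (snd (eM2 Os))) (fi2 g))) (fm2 g)) y"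
    using semi_assoc[OF semi _ gS y] semi_closed[OF semi oS pS] by simp
  then show ?thesis using A B E by (simp add: rm_eq)
qed

lemma ext_left:
  assumes g: "g \<in> SgM" and Os: "set Os \<subseteq> SgM" and W: "W \<noteq> []" "set W \<subseteq> SgM"
    and E: "eM2 W = (i0, m y (fm2 g), fl2 g)" and y: "y \<in> S"
  shows "eM2 (W @ Os) = (i0, m y (fst (snd (eM2 (g # Os)))), snd (snd (eM2 (g # Os))))"
proof (cases "Os = []")
  case True then show ?thesis using E by simp
next
  case False
  have gS: "fm2 g \<in> S" using fM_mem2 g by blast
  have oS: "fst (snd (eM2 Os)) \<in> S" using eM_mid2[OF False Os] .
  have pS: "P (fl2 g) (fst (eM2 Os)) \<in> S"
    using eM_in2[OF False Os] fM_mem2[OF g] Pin by (auto simp: rees_carrier_def)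
  have A: "eM2 (W @ Os) = rees_mult m P (eM2 W) (eM2 Os)" using eM_app2[OF W(1) False W(2) Os] .
  have B: "eM2 (g # Os) = rees_mult m P (fM g) (eM2 Os)" using eM_app2[of "[g]" Os] False Os g by simp
  have "m (m (m y (fm2 g)) (P (fl2 g) (fst (eM2 Os)))) (fst (snd (eM2 Os))) =
        m y (m (m (fm2 g) (P (fl2 g) (fst (eM2 Os)))) (fst (snd (eM2 Os))))"
    using semi_assoc[OF semi] semi_closed[OF semi] y gS pS oS by metis
  then show ?thesis using A B E by (simp add: rm_eq)
qed

lemma toutL2:
  "g \<in> SgM \<Longrightarrow> set Os \<subseteq> SgM \<Longrightarrow> w \<noteq> [] \<Longrightarrow> set w \<subseteq> SgS \<Longrightarrow>
   set (tout dL2 oL2 flG (Suc g) w) \<subseteq> SgM \<and> tout dL2 oL2 flG (Suc g) w \<noteq> [] \<and>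
   eM2 (Os @ tout dL2 oL2 flG (Suc g) w) = (fst (eM2 (Os @ [g])), m (fst (snd (eM2 (Os @ [g])))) (eS w), l0)"
proof (induction w arbitrary: Os g)
  case Nil then show ?case by simp
next
  case (Cons c w)
  have c: "c \<in> SgS" "set w \<subseteq> SgS" using Cons.prems by auto
  have q: "Suc g \<in> Q2" using Cons.prems unfolding Q2_def by simp
  define W where "W = rep (lt (Suc g) c)"
  have W: "W \<noteq> []" "set W \<subseteq> SgM" "eM2 W = (fi2 g, m (fm2 g) (fS c), l0)"
    using rep[OF lt_in[OF q c(1)]] unfolding W_def by (auto simp: lt_def)
  have cS: "fS c \<in> S" using fSS c by auto
  have T: "tout dL2 oL2 flG (Suc g) (c # w) = butlast W @ tout dL2 oL2 flG (Suc (last W)) w"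
    by (simp add: W_def dL2_def oL2_def)
  have EW: "eM2 (Os @ W) = (fst (eM2 (Os @ [g])), m (fst (snd (eM2 (Os @ [g])))) (fS c), l0)"
    by (rule ext_right[OF Cons.prems(1,2) W cS])
  have lW: "last W \<in> SgM" using W by auto
  have bW: "set (butlast W) \<subseteq> SgM" using W by (meson in_set_butlastD subset_code(1))
  show ?case
  proof (cases "w = []")
    case True
    have "tout dL2 oL2 flG (Suc g) (c # w) = W" using T True W by (simp add: flG_def)
    then show ?thesis using EW W True by simp
  next
    case False
    have O': "set (Os @ butlast W) \<subseteq> SgM" using bW Cons.prems by auto
    have IH: "set (tout dL2 oL2 flG (Suc (last W)) w) \<subseteq> SgM" "tout dL2 oL2 flG (Suc (last W)) w \<noteq> []"
      "eM2 ((Os @ butlast W) @ tout dL2 oL2 flG (Suc (last W)) w) =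
       (fst (eM2 ((Os @ butlast W) @ [last W])), m (fst (snd (eM2 ((Os @ butlast W) @ [last W])))) (eS w), l0)"
      using Cons.IH[OF lW O' False c(2)] by auto
    have OW: "(Os @ butlast W) @ [last W] = Os @ W" using W by simp
    have mS: "fst (snd (eM2 (Os @ [g]))) \<in> S" using eM_mid2[of "Os @ [g]"] Cons.prems by auto
    have wS: "eS w \<in> S" using eS_in2[OF False c(2)] .
    have "eS (c # w) = m (fS c) (eS w)" using False by (simp add: we_cons)
    then have "m (m (fst (snd (eM2 (Os @ [g])))) (fS c)) (eS w) = m (fst (snd (eM2 (Os @ [g])))) (eS (c # w))"
      using semi_assoc[OF semi mS cS wS] by simp
    then show ?thesis using T IH OW EW bW by simp
  qed
qed

lemma outL2: "u \<noteq> [] \<Longrightarrow> set u \<subseteq> SgS \<Longrightarrow>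
   set (tout dL2 oL2 flG 0 u) \<subseteq> SgM \<and> tout dL2 oL2 flG 0 u \<noteq> [] \<and>
   eM2 (tout dL2 oL2 flG 0 u) = (i0, eS u, l0)"
proof (cases u)
  case (Cons c w)
  assume "set u \<subseteq> SgS"
  then have c: "c \<in> SgS" "set w \<subseteq> SgS" using Cons by auto
  have q: "0 \<in> Q2" unfolding Q2_def by simp
  define W where "W = rep (lt 0 c)"
  have W: "W \<noteq> []" "set W \<subseteq> SgM" "eM2 W = (i0, fS c, l0)"
    using rep[OF lt_in[OF q c(1)]] unfolding W_def by (auto simp: lt_def)
  have T: "tout dL2 oL2 flG 0 (c # w) = butlast W @ tout dL2 oL2 flG (Suc (last W)) w"
    by (simp add: W_def dL2_def oL2_def)
  have lW: "last W \<in> SgM" using W by auto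
  have bW: "set (butlast W) \<subseteq> SgM" using W by (meson in_set_butlastD subset_code(1))
  show ?thesis
  proof (cases "w = []")
    case True
    have "tout dL2 oL2 flG 0 (c # w) = W" using T True W by (simp add: flG_def)
    then show ?thesis using W True Cons by simp
  next
    case False
    have OW: "butlast W @ [last W] = W" using W by simp
    from toutL2[OF lW bW False c(2)] show ?thesis using T OW W Cons False bW by (simp add: we_cons)
  qed
qed simp

lemma toutR2:
  "g \<in> SgM \<Longrightarrow> set Os \<subseteq> SgM \<Longrightarrow> x \<noteq> [] \<Longrightarrow> set x \<subseteq> SgS \<Longrightarrow>
   set (tout dR2 oR2 flG (Suc g) x) \<subseteq> SgM \<and> tout dR2 oR2 flG (Suc g) x \<noteq> [] \<and>
   eM2 (rev (tout dR2 oR2 flG (Suc g) x) @ Os) =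
     (i0, m (eS (rev x)) (fst (snd (eM2 (g # Os)))), snd (snd (eM2 (g # Os))))"
proof (induction x arbitrary: Os g)
  case Nil then show ?case by simp
next
  case (Cons c x)
  have c: "c \<in> SgS" "set x \<subseteq> SgS" using Cons.prems by auto
  have q: "Suc g \<in> Q2" using Cons.prems unfolding Q2_def by simp
  define W where "W = rep (rt (Suc g) c)"
  have W: "W \<noteq> []" "set W \<subseteq> SgM" "eM2 W = (i0, m (fS c) (fm2 g), fl2 g)"
    using rep[OF rt_in[OF q c(1)]] unfolding W_def by (auto simp: rt_def)
  have cS: "fS c \<in> S" using fSS c by auto
  have T: "tout dR2 oR2 flG (Suc g) (c # x) = rev (tl W) @ tout dR2 oR2 flG (Suc (hd W)) x"
    by (simp add: W_def dR2_def oR2_def)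
  have EW: "eM2 (W @ Os) = (i0, m (fS c) (fst (snd (eM2 (g # Os)))), snd (snd (eM2 (g # Os))))"
    by (rule ext_left[OF Cons.prems(1,2) W cS])
  have hW: "hd W \<in> SgM" using W by auto
  have tW: "set (tl W) \<subseteq> SgM" using W by (meson list.set_sel(2) subset_code(1) tl_Nil)
  show ?case
  proof (cases "x = []")
    case True
    have "tout dR2 oR2 flG (Suc g) (c # x) = rev (tl W) @ [hd W]" using T True by (simp add: flG_def)
    moreover have "rev (rev (tl W) @ [hd W]) = W" using W by simp
    ultimately show ?thesis using EW W True tW hW by auto
  next
    case False
    have O': "set (tl W @ Os) \<subseteq> SgM" using tW Cons.prems by auto
    have IH: "set (tout dR2 oR2 flG (Suc (hd W)) x) \<subseteq> SgM" "tout dR2 oR2 flG (Suc (hd W)) x \<noteq> []"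
      "eM2 (rev (tout dR2 oR2 flG (Suc (hd W)) x) @ (tl W @ Os)) =
       (i0, m (eS (rev x)) (fst (snd (eM2 (hd W # (tl W @ Os))))), snd (snd (eM2 (hd W # (tl W @ Os)))))"
      using Cons.IH[OF hW O' False c(2)] by auto
    have OW: "hd W # (tl W @ Os) = W @ Os" using W by simp
    have mS: "fst (snd (eM2 (g # Os))) \<in> S" using eM_mid2[of "g # Os"] Cons.prems by auto
    have xS: "eS (rev x) \<in> S" using eS_in2[of "rev x"] False c(2) by simp
    have "eS (rev (c # x)) = m (eS (rev x)) (fS c)" using False c eS_app2[of "rev x" "[c]"] by simp
    then have "m (eS (rev x)) (m (fS c) (fst (snd (eM2 (g # Os))))) = m (eS (rev (c # x))) (fst (snd (eM2 (g # Os))))"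
      using semi_assoc[OF semi xS cS mS] by simp
    moreover have "rev (tout dR2 oR2 flG (Suc g) (c # x)) @ Os = rev (tout dR2 oR2 flG (Suc (hd W)) x) @ (tl W @ Os)"
      using T by simp
    ultimately show ?thesis using T IH OW EW tW by simp
  qed
qed

lemma outR2: "x \<noteq> [] \<Longrightarrow> set x \<subseteq> SgS \<Longrightarrow>
   set (tout dR2 oR2 flG 0 x) \<subseteq> SgM \<and> tout dR2 oR2 flG 0 x \<noteq> [] \<and>
   eM2 (rev (tout dR2 oR2 flG 0 x)) = (i0, eS (rev x), l0)"
proof (cases x)
  case (Cons c w)
  assume "set x \<subseteq> SgS"
  then have c: "c \<in> SgS" "set w \<subseteq> SgS" using Cons by auto
  have q: "0 \<in> Q2" unfolding Q2_def by simp
  define W where "W = rep (rt 0 c)"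
  have W: "W \<noteq> []" "set W \<subseteq> SgM" "eM2 W = (i0, fS c, l0)"
    using rep[OF rt_in[OF q c(1)]] unfolding W_def by (auto simp: rt_def)
  have T: "tout dR2 oR2 flG 0 (c # w) = rev (tl W) @ tout dR2 oR2 flG (Suc (hd W)) w"
    by (simp add: W_def dR2_def oR2_def)
  have hW: "hd W \<in> SgM" using W by auto
  have tW: "set (tl W) \<subseteq> SgM" using W by (meson list.set_sel(2) subset_code(1) tl_Nil)
  show ?thesis
  proof (cases "w = []")
    case True
    have "tout dR2 oR2 flG 0 (c # w) = rev (tl W) @ [hd W]" using T True by (simp add: flG_def)
    moreover have "rev (rev (tl W) @ [hd W]) = W" using W by simp
    ultimately show ?thesis using W True Cons tW hW by auto
  next
    case False
    have OW: "hd W # tl W = W" using W by simp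
    have "rev (tout dR2 oR2 flG 0 (c # w)) = rev (tout dR2 oR2 flG (Suc (hd W)) w) @ tl W" using T by simp
    moreover have "eS (rev (c # w)) = m (eS (rev w)) (fS c)" using False c eS_app2[of "rev w" "[c]"] by simp
    ultimately show ?thesis using toutR2[OF hW tW False c(2)] T OW W Cons False tW by simp
  qed
qed simp

lemma cond2:
  assumes hM: "hM \<notin> SgM" and u: "u \<noteq> []" "set u \<subseteq> SgS" and x: "x \<noteq> []" "set x \<subseteq> SgS"
  shows "(eS u = eS (rev x)) \<longleftrightarrow>
    ((\<lambda>_ _. True) (foldl dL2 0 u) (foldl dR2 0 x) \<and>
     tout dL2 oL2 flG 0 u @ [hM] @ tout dR2 oR2 flG 0 x \<in> word_problem (rees_mult m P) fM SgM hM)"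
  using wp_mem[OF hM, of "tout dL2 oL2 flG 0 u" "tout dR2 oR2 flG 0 x" "rees_mult m P" fM] outL2[OF u] outR2[OF x]
  by simp

lemma dir2_lang:
  assumes hS: "hS \<notin> SgS" and hM: "hM \<notin> SgM"
  shows "word_problem m fS SgS hS =
   {u @ [hS] @ x | u x. u \<noteq> [] \<and> x \<noteq> [] \<and> set u \<subseteq> SgS \<and> set x \<subseteq> SgS \<and>
       (\<lambda>_ _. True) (foldl dL2 0 u) (foldl dR2 0 x) \<and>
       tout dL2 oL2 flG 0 u @ [hM] @ tout dR2 oR2 flG 0 x \<in> word_problem (rees_mult m P) fM SgM hM}"
  apply (rule set_eqI)
  apply (simp only: wp_alt[of m fS SgS hS] mem_Collect_eq)
  apply (rule iffI; elim exE conjE)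
  subgoal for w u x by (rule exI[of _ u], rule exI[of _ x]) (simp add: cond2[OF hM])
  subgoal for w u x by (rule exI[of _ u], rule exI[of _ x]) (simp add: cond2[OF hM])
  done

lemma dir2:
  assumes C: "closed_inv_gsm C" "word_problem (rees_mult m P) fM SgM hM \<in> C" and hS: "hS \<notin> SgS" and hM: "hM \<notin> SgM"
    and fin: "finite SgS" "finite SgM"
  shows "word_problem m fS SgS hS \<in> C"
proof -
  have q0: "0 \<in> Q2" by (simp add: Q2_def)
  show ?thesis unfolding dir2_lang[OF hS hM]
    by (rule gen_in_C[OF C fin(1) Q2_fin[OF fin(2)] Q2_fin[OF fin(2)] hS q0 q0 Q2_clL Q2_clR])
qed

end


lemma gen_mid:
  assumes "z \<in> gen_by (rees_mult m P) (fM ` Sg)"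
  shows "fst (snd z) \<in> gen_by m ((fst \<circ> snd \<circ> fM) ` Sg \<union> (\<lambda>(a, b). P (snd (snd (fM a))) (fst (fM b))) ` (Sg \<times> Sg))
    \<and> (\<exists>a\<in>Sg. fst z = fst (fM a)) \<and> (\<exists>b\<in>Sg. snd (snd z) = snd (snd (fM b)))"
  using assms
proof (induction rule: gen_by.induct)
  case (gen_base a)
  then obtain s where s: "s \<in> Sg" "a = fM s" by blast
  have "fst (snd a) \<in> (fst \<circ> snd \<circ> fM) ` Sg" using s by auto
  then show ?case using s by (blast intro: gen_by.gen_base)
next
  case (gen_mult x y)
  let ?Y = "(fst \<circ> snd \<circ> fM) ` Sg \<union> (\<lambda>(a, b). P (snd (snd (fM a))) (fst (fM b))) ` (Sg \<times> Sg)"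
  obtain a b where ab: "a \<in> Sg" "snd (snd x) = snd (snd (fM a))" "b \<in> Sg" "fst y = fst (fM b)"
    using gen_mult.IH by blast
  have "P (snd (snd x)) (fst y) \<in> ?Y" using ab by force
  then have p: "P (snd (snd x)) (fst y) \<in> gen_by m ?Y" by (rule gen_by.gen_base)
  have "fst (snd (rees_mult m P x y)) = m (m (fst (snd x)) (P (snd (snd x)) (fst y))) (fst (snd y))"
    by (simp add: rm_eq)
  moreover have "m (m (fst (snd x)) (P (snd (snd x)) (fst y))) (fst (snd y)) \<in> gen_by m ?Y"
    using gen_mult.IH p by (blast intro: gen_by.gen_mult)
  ultimately show ?case using gen_mult.IH by (simp add: rm_eq)
qed

theorem mainTheorem12:
  fixes C :: "nat list set set"
    and S :: "'a set" and m :: "'a \<Rightarrow> 'a \<Rightarrow> 'a"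
    and I :: "'i set" and L :: "'l set" and P :: "'l \<Rightarrow> 'i \<Rightarrow> 'a"
  assumes "closed_inv_gsm C" and "closed_int_regular C"
    and "is_semigroup S m" and "S \<noteq> {}"
    and "I \<noteq> {}" and "L \<noteq> {}"
    and "\<forall>l\<in>L. \<forall>i\<in>I. P l i \<in> S"
    and "finitely_generated (rees_carrier S I L) (rees_mult m P)"
  shows "is_U C (rees_carrier S I L) (rees_mult m P) \<longleftrightarrow> is_U C S m"
proof
  assume "is_U C (rees_carrier S I L) (rees_mult m P)"
  then obtain Sg fM h where H: "finite Sg" "h \<notin> Sg" "inj_on fM Sg" "fM ` Sg \<subseteq> rees_carrier S I L"
    "gen_by (rees_mult m P) (fM ` Sg) = rees_carrier S I L" "word_problem (rees_mult m P) fM Sg h \<in> C"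
    unfolding is_U_def by blast
  define Y where "Y = (fst \<circ> snd \<circ> fM) ` Sg \<union> (\<lambda>(a, b). P (snd (snd (fM a))) (fst (fM b))) ` (Sg \<times> Sg)"
  have Yfin: "finite Y" unfolding Y_def using H(1) by simp
  have YS: "Y \<subseteq> S"
  proof
    fix y assume "y \<in> Y"
    have c: "\<And>a. a \<in> Sg \<Longrightarrow> fst (fM a) \<in> I \<and> fst (snd (fM a)) \<in> S \<and> snd (snd (fM a)) \<in> L"
    proof -
      fix a assume "a \<in> Sg"
      then have "fM a \<in> I \<times> S \<times> L" using H(4) by (auto simp: rees_carrier_def)
      then show "fst (fM a) \<in> I \<and> fst (snd (fM a)) \<in> S \<and> snd (snd (fM a)) \<in> L" by (auto simp: mem_Times_iff)
    qed
    show "y \<in> S" using \<open>y \<in> Y\<close> unfolding Y_def using c assms(7) by auto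
  qed
  obtain i0 where i0: "i0 \<in> I" using assms(5) by blast
  obtain l0 where l0: "l0 \<in> L" using assms(6) by blast
  have genY: "gen_by m Y = S"
  proof
    show "gen_by m Y \<subseteq> S" by (rule gen_sub[OF assms(3) YS])
  next
    show "S \<subseteq> gen_by m Y"
    proof
      fix x assume "x \<in> S"
      then have "(i0, x, l0) \<in> gen_by (rees_mult m P) (fM ` Sg)" using H(5) i0 l0 by (simp add: rees_carrier_def)
      from gen_mid[OF this] show "x \<in> gen_by m Y" unfolding Y_def by simp
    qed
  qed
  obtain e where e: "bij_betw e {0..<card Y} Y" using ex_bij_betw_nat_finite[OF Yfin] by blast
  have eY: "e ` {0..<card Y} = Y" using e by (rule bij_betw_imp_surj_on)
  have einj: "inj_on e {0..<card Y}" using e by (rule bij_betw_imp_inj_on)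
  have "word_problem m e {0..<card Y} (card Y) \<in> C"
    by (rule dir2[OF assms(3) assms(7) H(4) H(5) _ i0 l0 assms(1) H(6) _ H(2) _ H(1)])
       (use eY YS in auto)
  then show "is_U C S m" unfolding is_U_def using eY einj YS genY
    by (intro exI[of _ "{0..<card Y}"] exI[of _ e] exI[of _ "card Y"]) auto
next
  assume "is_U C S m"
  then obtain Sg f h where H: "finite Sg" "h \<notin> Sg" "inj_on f Sg" "f ` Sg \<subseteq> S"
    "gen_by m (f ` Sg) = S" "word_problem m f Sg h \<in> C"
    unfolding is_U_def by blast
  obtain A where A: "finite A" "A \<subseteq> rees_carrier S I L" "gen_by (rees_mult m P) A = rees_carrier S I L"
    using assms(8) unfolding finitely_generated_def by blast
  obtain e where e: "bij_betw e {0..<card A} A" using ex_bij_betw_nat_finite[OF A(1)] by blast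
  have eA: "e ` {0..<card A} = A" using e by (rule bij_betw_imp_surj_on)
  have einj: "inj_on e {0..<card A}" using e by (rule bij_betw_imp_inj_on)
  have "word_problem (rees_mult m P) e {0..<card A} (card A) \<in> C"
    by (rule dir1[OF assms(3) assms(7) H(4) H(5) _ assms(1) H(6) H(2)]) (use eA A in auto)
  then show "is_U C (rees_carrier S I L) (rees_mult m P)" unfolding is_U_def using eA einj A
    by (intro exI[of _ "{0..<card A}"] exI[of _ e] exI[of _ "card A"]) auto
qed


end
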